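(* Let $K\le M$ be positive integers, $P>0$, and let $\mathbf{H}\in\mathbb{C}^{K\times M}$ have i.i.d. circularly-symmetric complex Gaussian entries with zero mean and unit variance. Let $\mathbf{F}=\mathbf{H}^*(\mathbf{H}\mathbf{H}^* )^{-1}=[\mathbf{f}_1,\dots,\mathbf{f}_K]$. Then $$\mathbb{E}\left[\sum_{k=1}^{K}\log_2\!\left(1+\frac{P}{K\|\mathbf{f}_k\|^2}\right)\right]\le K\log_2\!\left(1+\frac{P(M-K+1)}{K}\right).$$
   Context: The left-hand side is the ergodic downlink sum rate of zero-forcing precoding with vector normalization (beamformers $\mathbf{f}_k/(\sqrt{K}\|\mathbf{f}_k\|)$, total transmit power $P$, unit noise variance), since with ZF the interference vanishes and the received signal power of user $k$ is $P/(K\|\mathbf{f}_k\|^2)$. *)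

theory Defs
  imports "HOL-Probability.Probability" "Jordan_Normal_Form.Gauss_Jordan_Elimination"
    "Jordan_Normal_Form.Schur_Decomposition"
begin

text \<open>Circularly-symmetric complex Gaussian CN(0,1): real and imaginary parts
  independent real normals with mean 0 and variance 1/2 (standard deviation sqrt(1/2)).\<close>
definition complex_gaussian :: "complex measure" where
  "complex_gaussian =
     distr (density lborel (normal_density 0 (sqrt (1/2)))
            \<Otimes>\<^sub>M density lborel (normal_density 0 (sqrt (1/2))))
           borel (\<lambda>(x, y). Complex x y)"

definition channel_measure :: "nat \<Rightarrow> nat \<Rightarrow> (nat \<times> nat \<Rightarrow> complex) measure" where
  "channel_measure K M = PiM ({..<K} \<times> {..<M}) (\<lambda>_. complex_gaussian)"

definition channel_mat :: "nat \<Rightarrow> nat \<Rightarrow> (nat \<times> nat \<Rightarrow> complex) \<Rightarrow> complex mat" where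
  "channel_mat K M h = mat K M (\<lambda>(i, j). h (i, j))"

definition zf_precoder :: "complex mat \<Rightarrow> complex mat" where
  "zf_precoder H = mat_adjoint H * the (mat_inverse (H * mat_adjoint H))"

definition vec_norm_sq :: "complex vec \<Rightarrow> real" where
  "vec_norm_sq v = (\<Sum>j<dim_vec v. (cmod (v $ j))\<^sup>2)"

end

theory Submission
  imports Defs
begin


abbreviation "NN \<equiv> density lborel (normal_density 0 (sqrt (1/2)))"

lemma prob_NN: "prob_space NN"
  by (rule prob_space_normal_density) simp

lemma sets_NN[measurable_cong]: "sets NN = sets borel" by simp

lemma meas_Complex[measurable]: "(\<lambda>(x,y). Complex x y) \<in> borel_measurable (NN \<Otimes>\<^sub>M NN)"
proof -
  have "(\<lambda>(x,y). Complex x y) = (\<lambda>p. complex_of_real (fst p) + \<i> * complex_of_real (snd p))"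
    by (auto simp: fun_eq_iff complex_eq_iff)
  moreover have "(\<lambda>p. complex_of_real (fst p) + \<i> * complex_of_real (snd p)) \<in> borel_measurable (NN \<Otimes>\<^sub>M NN)"
    by measurable
  ultimately show ?thesis by simp
qed

lemma prob_CG: "prob_space complex_gaussian"
  unfolding complex_gaussian_def
  apply (rule prob_space.prob_space_distr)
   apply (rule prob_space_pair)
  using prob_NN apply auto[2]
  by (rule meas_Complex)

lemma NN_point: "emeasure NN {a} = 0"
proof -
  have ae: "AE x in lborel. x \<in> {a} \<longrightarrow> normal_density 0 (sqrt (1/2)) x = 0"
    by (rule eventually_mono[OF AE_lborel_singleton[of a]]) simp
  have "{a} \<in> null_sets NN" using ae by (subst null_sets_density_iff) auto
  then show ?thesis by auto
qed

lemma CG_point: "emeasure complex_gaussian {z} = 0"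
proof -
  interpret p: sigma_finite_measure NN
    by (simp add: prob_NN prob_space_imp_sigma_finite)
  have "(\<lambda>(x,y). Complex x y) -` {z} \<inter> space (NN \<Otimes>\<^sub>M NN) = {Re z} \<times> {Im z}"
    by (auto simp: space_pair_measure complex_eq_iff)
  then have "emeasure complex_gaussian {z} = emeasure (NN \<Otimes>\<^sub>M NN) ({Re z} \<times> {Im z})"
    unfolding complex_gaussian_def by (subst emeasure_distr) auto
  also have "\<dots> = 0" by (subst p.emeasure_pair_measure_Times) (auto simp: NN_point)
  finally show ?thesis .
qed


lemma NN_int1: "integrable NN (\<lambda>x. x)" and NN_mean: "(\<integral>x. x \<partial>NN) = 0"
  and NN_int2: "integrable NN (\<lambda>x. x^2)" and NN_sq: "(\<integral>x. x^2 \<partial>NN) = 1/2"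
proof -
  have s: "0 < sqrt (1/2::real)" by simp
  show "integrable NN (\<lambda>x. x)"
    by (subst integrable_density) (auto intro: integrable_normal_moment_nz_1[OF s])
  show "(\<integral>x. x \<partial>NN) = 0"
    by (subst integral_density) (auto simp: integral_normal_moment_nz_1[OF s])
  have "has_bochner_integral lborel (\<lambda>x. normal_density 0 (sqrt (1/2)) x * (x - 0) ^ (2 * 1))
     (fact (2 * 1) / ((2 / (sqrt (1/2))\<^sup>2)^1 * fact 1))"
    by (rule normal_moment_even[OF s])
  then have h: "has_bochner_integral lborel (\<lambda>x. normal_density 0 (sqrt (1/2)) x * x^2) (1/2)"
    by (simp add: fact_numeral)
  have hi: "integrable lborel (\<lambda>x. normal_density 0 (sqrt (1/2)) x * x^2)"
    by (rule integrable.intros[OF h])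
  show "integrable NN (\<lambda>x. x^2)"
    using hi by (subst integrable_density) auto
  show "(\<integral>x. x^2 \<partial>NN) = 1/2"
    using h by (subst integral_density) (auto dest: has_bochner_integral_integral_eq)
qed

lemma pair_fst:
  fixes f :: "real \<Rightarrow> 'b::{banach,second_countable_topology}"
  assumes [measurable]: "f \<in> borel_measurable borel"
  shows "integrable (NN \<Otimes>\<^sub>M NN) (\<lambda>p. f (fst p)) = integrable NN f"
    "(\<integral>p. f (fst p) \<partial>(NN \<Otimes>\<^sub>M NN)) = (\<integral>x. f x \<partial>NN)"
proof -
  interpret prob_space NN by (rule prob_NN)
  have d: "distr (NN \<Otimes>\<^sub>M NN) NN fst = NN" by (rule distr_pair_fst)
  show "integrable (NN \<Otimes>\<^sub>M NN) (\<lambda>p. f (fst p)) = integrable NN f"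
    by (subst d[symmetric], subst integrable_distr_eq) auto
  show "(\<integral>p. f (fst p) \<partial>(NN \<Otimes>\<^sub>M NN)) = (\<integral>x. f x \<partial>NN)"
    by (subst d[symmetric], subst integral_distr) auto
qed

lemma pair_snd:
  fixes f :: "real \<Rightarrow> 'b::{banach,second_countable_topology}"
  assumes [measurable]: "f \<in> borel_measurable borel"
  shows "integrable (NN \<Otimes>\<^sub>M NN) (\<lambda>p. f (snd p)) = integrable NN f"
    "(\<integral>p. f (snd p) \<partial>(NN \<Otimes>\<^sub>M NN)) = (\<integral>x. f x \<partial>NN)"
proof -
  interpret p: pair_sigma_finite NN NN
    by (simp add: pair_sigma_finite.intro prob_NN prob_space_imp_sigma_finite)
  have sw: "NN \<Otimes>\<^sub>M NN = distr (NN \<Otimes>\<^sub>M NN) (NN \<Otimes>\<^sub>M NN) (\<lambda>(x,y). (y,x))"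
    by (rule p.distr_pair_swap)
  show "integrable (NN \<Otimes>\<^sub>M NN) (\<lambda>p. f (snd p)) = integrable NN f"
    apply (subst sw, subst integrable_distr_eq)
    by (auto simp: case_prod_beta pair_fst)
  show "(\<integral>p. f (snd p) \<partial>(NN \<Otimes>\<^sub>M NN)) = (\<integral>x. f x \<partial>NN)"
    apply (subst sw, subst integral_distr)
    by (auto simp: case_prod_beta pair_fst)
qed

lemma CG_integral:
  fixes g :: "complex \<Rightarrow> 'b::{banach,second_countable_topology}"
  assumes [measurable]: "g \<in> borel_measurable borel"
  shows "integrable complex_gaussian g = integrable (NN \<Otimes>\<^sub>M NN) (\<lambda>p. g (Complex (fst p) (snd p)))"
    "(\<integral>z. g z \<partial>complex_gaussian) = (\<integral>p. g (Complex (fst p) (snd p)) \<partial>(NN \<Otimes>\<^sub>M NN))"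
proof -
  have m: "(\<lambda>(x,y). Complex x y) \<in> measurable (NN \<Otimes>\<^sub>M NN) borel" by (rule meas_Complex)
  show "integrable complex_gaussian g = integrable (NN \<Otimes>\<^sub>M NN) (\<lambda>p. g (Complex (fst p) (snd p)))"
    unfolding complex_gaussian_def by (subst integrable_distr_eq[OF m]) (auto simp: case_prod_beta)
  show "(\<integral>z. g z \<partial>complex_gaussian) = (\<integral>p. g (Complex (fst p) (snd p)) \<partial>(NN \<Otimes>\<^sub>M NN))"
    unfolding complex_gaussian_def by (subst integral_distr[OF m]) (auto simp: case_prod_beta)
qed

lemma Complex_eq': "Complex x y = complex_of_real x + \<i> * complex_of_real y"
  by (simp add: complex_eq_iff)

lemma CG_int1: "integrable complex_gaussian (\<lambda>z. z)" and CG_mean: "(\<integral>z. z \<partial>complex_gaussian) = 0"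
proof -
  have i1: "integrable (NN \<Otimes>\<^sub>M NN) (\<lambda>p. complex_of_real (fst p))"
    by (subst pair_fst) (auto intro: NN_int1)
  have i2: "integrable (NN \<Otimes>\<^sub>M NN) (\<lambda>p. \<i> * complex_of_real (snd p))"
    by (intro integrable_mult_right, subst pair_snd) (auto intro: NN_int1)
  show "integrable complex_gaussian (\<lambda>z. z)"
    by (subst CG_integral) (auto simp: Complex_eq' intro!: Bochner_Integration.integrable_add i1 i2)
  show "(\<integral>z. z \<partial>complex_gaussian) = 0"
    apply (subst CG_integral, simp)
    apply (simp add: Complex_eq' Bochner_Integration.integral_add[OF i1 i2])
    using pair_fst(2)[of "\<lambda>x. x"] pair_snd(2)[of "\<lambda>x. x"] NN_mean by simp
qed

lemma CG_int2: "integrable complex_gaussian (\<lambda>z. cnj z * z)" and CG_sq: "(\<integral>z. cnj z * z \<partial>complex_gaussian) = 1"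
proof -
  have e: "\<And>p. cnj (Complex (fst p) (snd p)) * Complex (fst p) (snd p)
     = complex_of_real ((fst p)^2) + complex_of_real ((snd p)^2)"
    by (simp add: complex_eq_iff power2_eq_square)
  have i1: "integrable (NN \<Otimes>\<^sub>M NN) (\<lambda>p. complex_of_real ((fst p)^2))"
    using pair_fst(1)[of "\<lambda>x. complex_of_real (x^2)"] NN_int2 by (simp del: of_real_power)
  have i2: "integrable (NN \<Otimes>\<^sub>M NN) (\<lambda>p. complex_of_real ((snd p)^2))"
    using pair_snd(1)[of "\<lambda>x. complex_of_real (x^2)"] NN_int2 by (simp del: of_real_power)
  have m: "(\<lambda>z. cnj z * z) \<in> borel_measurable borel"
    by (intro borel_measurable_continuous_onI continuous_intros)
  show "integrable complex_gaussian (\<lambda>z. cnj z * z)"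
    apply (subst CG_integral[OF m])
    apply (simp only: e)
    by (intro Bochner_Integration.integrable_add i1 i2)
  show "(\<integral>z. cnj z * z \<partial>complex_gaussian) = 1"
    apply (subst CG_integral[OF m])
    apply (simp only: e Bochner_Integration.integral_add[OF i1 i2])
    using pair_fst(2)[of "\<lambda>x. x^2"] pair_snd(2)[of "\<lambda>x. x^2"] NN_sq
    by (simp del: of_real_power add: complex_eq_iff)
qed


abbreviation "Gs \<equiv> complex_gaussian"

interpretation CGP: product_sigma_finite "\<lambda>_::nat\<times>nat. complex_gaussian"
  unfolding product_sigma_finite_def
  using prob_CG prob_space_imp_sigma_finite by auto

lemma CG_meas_cnj[measurable]: "cnj \<in> borel_measurable (borel :: complex measure)"
  by (intro borel_measurable_continuous_onI continuous_intros)

lemma CG_int_cnj: "integrable Gs cnj" "(\<integral>z. cnj z \<partial>Gs) = 0"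
proof -
  show "integrable Gs cnj" using integrable_cnj[OF CG_int1] by simp
  show "(\<integral>z. cnj z \<partial>Gs) = 0" using Bochner_Integration.integral_cnj[of Gs "\<lambda>z. z"] CG_mean by simp
qed

lemma PiM_pair_moment:
  fixes a b :: "nat \<times> nat"
  assumes R: "finite R" and a: "a \<in> R" and b: "b \<in> R"
  shows "integrable (PiM R (\<lambda>_. Gs)) (\<lambda>y. cnj (y a) * y b)"
    "(\<integral>y. cnj (y a) * y b \<partial>PiM R (\<lambda>_. Gs)) = (if a = b then 1 else 0)"
proof -
  define f :: "nat\<times>nat \<Rightarrow> complex \<Rightarrow> complex" where "f = (\<lambda>i. if i = a \<and> i = b then (\<lambda>z. cnj z * z)
     else if i = a then cnj else if i = b then (\<lambda>z. z) else (\<lambda>_. 1::complex))"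
  interpret gp: prob_space Gs by (rule prob_CG)
  have fi: "\<And>i. integrable Gs (f i)"
    unfolding f_def using CG_int2 CG_int1 CG_int_cnj by auto
  have pe: "\<And>y. (\<Prod>i\<in>R. f i (y i)) = cnj (y a) * y b"
  proof -
    fix y :: "nat\<times>nat \<Rightarrow> complex"
    show "(\<Prod>i\<in>R. f i (y i)) = cnj (y a) * y b"
    proof (cases "a = b")
      case True
      have "(\<Prod>i\<in>R. f i (y i)) = f a (y a) * (\<Prod>i\<in>R-{a}. f i (y i))"
        using R a by (simp add: prod.remove)
      also have "(\<Prod>i\<in>R-{a}. f i (y i)) = 1" by (rule prod.neutral) (auto simp: f_def True)
      finally show ?thesis by (simp add: f_def True)
    next
      case False
      have "(\<Prod>i\<in>R. f i (y i)) = f a (y a) * (\<Prod>i\<in>R-{a}. f i (y i))"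
        using R a by (simp add: prod.remove)
      also have "(\<Prod>i\<in>R-{a}. f i (y i)) = f b (y b) * (\<Prod>i\<in>R-{a}-{b}. f i (y i))"
        using R b False by (subst prod.remove[of "R-{a}" b]) auto
      also have "(\<Prod>i\<in>R-{a}-{b}. f i (y i)) = 1" by (rule prod.neutral) (auto simp: f_def)
      finally show ?thesis using False by (simp add: f_def)
    qed
  qed
  show "integrable (PiM R (\<lambda>_. Gs)) (\<lambda>y. cnj (y a) * y b)"
    using CGP.product_integrable_prod[OF R, of f] fi by (simp add: pe)
  have "(\<integral>y. cnj (y a) * y b \<partial>PiM R (\<lambda>_. Gs)) = (\<Prod>i\<in>R. integral\<^sup>L Gs (f i))"
    using CGP.product_integral_prod[OF R, of f] fi by (simp add: pe)
  also have "\<dots> = (if a = b then 1 else 0)"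
  proof (cases "a = b")
    case True
    have "(\<Prod>i\<in>R. integral\<^sup>L Gs (f i)) = integral\<^sup>L Gs (f a) * (\<Prod>i\<in>R-{a}. integral\<^sup>L Gs (f i))"
      using R a by (simp add: prod.remove)
    also have "(\<Prod>i\<in>R-{a}. integral\<^sup>L Gs (f i)) = 1" 
      by (rule prod.neutral) (auto simp: f_def True prob_space.prob_space prob_CG)
    finally show ?thesis by (simp add: f_def True CG_sq)
  next
    case False
    have "(\<Prod>i\<in>R. integral\<^sup>L Gs (f i)) = integral\<^sup>L Gs (f a) * (\<Prod>i\<in>R-{a}. integral\<^sup>L Gs (f i))"
      using R a by (simp add: prod.remove)
    also have "integral\<^sup>L Gs (f a) = 0" using False CG_int_cnj by (simp add: f_def)
    finally show ?thesis using False by simp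
  qed
  finally show "(\<integral>y. cnj (y a) * y b \<partial>PiM R (\<lambda>_. Gs)) = (if a = b then 1 else 0)" .
qed

lemma PiM_quad:
  fixes c :: "nat \<Rightarrow> complex" and \<iota> :: "nat \<Rightarrow> nat \<times> nat"
  assumes R: "finite R" and \<iota>: "inj_on \<iota> {..<n}" "\<iota> ` {..<n} \<subseteq> R"
  shows "integrable (PiM R (\<lambda>_. Gs)) (\<lambda>y. (cmod (\<Sum>j<n. c j * cnj (y (\<iota> j))))\<^sup>2)"
    "(\<integral>y. (cmod (\<Sum>j<n. c j * cnj (y (\<iota> j))))\<^sup>2 \<partial>PiM R (\<lambda>_. Gs)) = (\<Sum>j<n. (cmod (c j))\<^sup>2)"
proof -
  let ?P = "PiM R (\<lambda>_. Gs)"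
  have e: "\<And>y. complex_of_real ((cmod (\<Sum>j<n. c j * cnj (y (\<iota> j))))\<^sup>2) =
     (\<Sum>j<n. \<Sum>l<n. (c j * cnj (c l)) * (cnj (y (\<iota> j)) * y (\<iota> l)))"
  proof -
    fix y :: "nat\<times>nat \<Rightarrow> complex"
    have "complex_of_real ((cmod (\<Sum>j<n. c j * cnj (y (\<iota> j))))\<^sup>2) =
       (\<Sum>j<n. c j * cnj (y (\<iota> j))) * cnj (\<Sum>l<n. c l * cnj (y (\<iota> l)))"
      by (rule complex_norm_square)
    also have "\<dots> = (\<Sum>j<n. \<Sum>l<n. (c j * cnj (c l)) * (cnj (y (\<iota> j)) * y (\<iota> l)))"
      by (simp add: sum_distrib_left sum_distrib_right mult_ac, rule sum.swap)
    finally show "?thesis y" .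
  qed
  have ij: "\<And>j l. j < n \<Longrightarrow> l < n \<Longrightarrow> integrable ?P (\<lambda>y. (c j * cnj (c l)) * (cnj (y (\<iota> j)) * y (\<iota> l)))"
    by (rule integrable_mult_right, rule PiM_pair_moment(1)[OF R]) (use \<iota> in auto)
  have ci: "integrable ?P (\<lambda>y. complex_of_real ((cmod (\<Sum>j<n. c j * cnj (y (\<iota> j))))\<^sup>2))"
    unfolding e using ij by (intro Bochner_Integration.integrable_sum) auto
  then show ri: "integrable ?P (\<lambda>y. (cmod (\<Sum>j<n. c j * cnj (y (\<iota> j))))\<^sup>2)"
    by (simp only: complex_of_real_integrable_eq)
  have "complex_of_real (\<integral>y. (cmod (\<Sum>j<n. c j * cnj (y (\<iota> j))))\<^sup>2 \<partial>?P)
     = (\<integral>y. complex_of_real ((cmod (\<Sum>j<n. c j * cnj (y (\<iota> j))))\<^sup>2) \<partial>?P)"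
    by (rule integral_complex_of_real[symmetric])
  also have "\<dots> = (\<Sum>j<n. \<integral>y. (\<Sum>l<n. (c j * cnj (c l)) * (cnj (y (\<iota> j)) * y (\<iota> l))) \<partial>?P)"
    unfolding e using ij by (intro Bochner_Integration.integral_sum Bochner_Integration.integrable_sum) auto
  also have "\<dots> = (\<Sum>j<n. \<Sum>l<n. \<integral>y. (c j * cnj (c l)) * (cnj (y (\<iota> j)) * y (\<iota> l)) \<partial>?P)"
    using ij by (intro sum.cong refl Bochner_Integration.integral_sum) auto
  also have "\<dots> = (\<Sum>j<n. \<Sum>l<n. (c j * cnj (c l)) * (if j = l then 1 else 0))"
  proof (intro sum.cong refl)
    fix j l assume j: "j \<in> {..<n}" and l: "l \<in> {..<n}"
    have "(\<iota> j = \<iota> l) = (j = l)" using \<iota>(1) j l by (auto dest: inj_onD)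
    have "\<iota> j \<in> R" "\<iota> l \<in> R" using \<iota>(2) j l by auto
    then show "(\<integral>y. (c j * cnj (c l)) * (cnj (y (\<iota> j)) * y (\<iota> l)) \<partial>?P) = (c j * cnj (c l)) * (if j = l then 1 else 0)"
      using PiM_pair_moment(2)[OF R \<open>\<iota> j \<in> R\<close> \<open>\<iota> l \<in> R\<close>] \<open>(\<iota> j = \<iota> l) = (j = l)\<close> by auto
  qed
  also have "\<dots> = (\<Sum>j<n. complex_of_real ((cmod (c j))\<^sup>2))"
  proof (intro sum.cong refl)
    fix j assume j: "j \<in> {..<n}"
    have "(\<Sum>l<n. (c j * cnj (c l)) * (if j = l then 1 else 0)) = c j * cnj (c j)"
      using j by (simp add: if_distrib[where f="\<lambda>x. c j * cnj (c _) * x"] sum.delta cong: if_cong)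
    also have "\<dots> = complex_of_real ((cmod (c j))\<^sup>2)" by (rule complex_norm_square[symmetric])
    finally show "(\<Sum>l<n. (c j * cnj (c l)) * (if j = l then 1 else 0)) = complex_of_real ((cmod (c j))\<^sup>2)" .
  qed
  finally show "(\<integral>y. (cmod (\<Sum>j<n. c j * cnj (y (\<iota> j))))\<^sup>2 \<partial>?P) = (\<Sum>j<n. (cmod (c j))\<^sup>2)"
    by (simp only: of_real_sum[symmetric] of_real_eq_iff)
qed


lemma space_Gs[simp]: "space Gs = UNIV"
  unfolding complex_gaussian_def by simp

lemma slice_null:
  fixes I :: "(nat\<times>nat) set"
  assumes I: "finite I" and i: "i \<in> I" and S: "S \<in> sets (PiM I (\<lambda>_. Gs))"
    and sl: "\<And>h x y. h \<in> space (PiM I (\<lambda>_. Gs)) \<Longrightarrow> h(i:=x) \<in> S \<Longrightarrow> h(i:=y) \<in> S \<Longrightarrow> x = y"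
  shows "emeasure (PiM I (\<lambda>_. Gs)) S = 0"
proof -
  have II: "I = insert i (I - {i})" using i by auto
  have fI: "finite (I - {i})" using I by auto
  have "emeasure (PiM I (\<lambda>_. Gs)) S = (\<integral>\<^sup>+ h. indicator S h \<partial>PiM I (\<lambda>_. Gs))"
    using S by simp
  also have "\<dots> = (\<integral>\<^sup>+ x. (\<integral>\<^sup>+ y. indicator S (x(i := y)) \<partial>Gs) \<partial>PiM (I - {i}) (\<lambda>_. Gs))"
    apply (subst II)
    apply (rule CGP.product_nn_integral_insert[OF fI])
    using S II by auto
  also have "\<dots> = (\<integral>\<^sup>+ x. 0 \<partial>PiM (I - {i}) (\<lambda>_. Gs))"
  proof (rule nn_integral_cong)
    fix x assume x: "x \<in> space (PiM (I - {i}) (\<lambda>_. Gs))"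
    have hx: "x(i:=0) \<in> space (PiM I (\<lambda>_. Gs))"
      using x i by (auto simp: space_PiM PiE_def extensional_def)
    show "(\<integral>\<^sup>+ y. indicator S (x(i := y)) \<partial>Gs) = 0"
    proof (cases "\<exists>y0. x(i:=y0) \<in> S")
      case True
      then obtain y0 where y0: "x(i:=y0) \<in> S" by auto
      have "(\<integral>\<^sup>+ y. indicator S (x(i := y)) \<partial>Gs) \<le> (\<integral>\<^sup>+ y. indicator {y0} y \<partial>Gs)"
      proof (rule nn_integral_mono)
        fix y
        show "indicator S (x(i := y)) \<le> (indicator {y0} y :: ennreal)"
        proof (cases "x(i:=y) \<in> S")
          case True
          have "y = y0" using sl[OF hx, of y y0] True y0 by simp
          then show ?thesis by (simp add: indicator_def)
        qed simp
      qed
      also have "\<dots> = emeasure Gs {y0}" by (rule nn_integral_indicator) (simp add: complex_gaussian_def)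
      also have "\<dots> = 0" by (rule CG_point)
      finally show ?thesis by simp
    next
      case False
      then show ?thesis by simp
    qed
  qed
  also have "\<dots> = 0" by simp
  finally show ?thesis .
qed

lemma meas_det:
  fixes A :: "'a \<Rightarrow> complex mat"
  assumes "\<And>h. A h \<in> carrier_mat n n"
    and "\<And>i j. i < n \<Longrightarrow> j < n \<Longrightarrow> (\<lambda>h. A h $$ (i,j)) \<in> borel_measurable N"
  shows "(\<lambda>h. det (A h)) \<in> borel_measurable N"
proof -
  have "(\<lambda>h. det (A h)) = (\<lambda>h. \<Sum>p \<in> {p. p permutes {0..<n}}. of_int (sign p) * (\<Prod>i = 0..<n. A h $$ (i, p i)))"
    using assms(1) by (auto simp: det_def' fun_eq_iff)
  also have "\<dots> \<in> borel_measurable N"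
  proof (intro borel_measurable_sum borel_measurable_times borel_measurable_const borel_measurable_prod)
    fix p i assume p: "p \<in> {p. p permutes {0..<n}}" and i: "i \<in> {0..<n}"
    have "p i < n" using p i permutes_in_image by fastforce
    then show "(\<lambda>h. A h $$ (i, p i)) \<in> borel_measurable N" using assms(2) i by auto
  qed
  finally show ?thesis .
qed


definition LB :: "nat \<Rightarrow> (nat\<times>nat \<Rightarrow> complex) \<Rightarrow> complex mat" where
  "LB n h = mat n n (\<lambda>(i,j). h (i,j))"

lemma LB_carrier[simp]: "LB n h \<in> carrier_mat n n" by (simp add: LB_def)

lemma LB_delete: "mat_delete (LB (Suc n) g) n n = LB n g"
  by (rule eq_matI) (auto simp: LB_def mat_delete_def)

lemma LB_cof_cong:
  assumes "\<And>i j. i < n \<Longrightarrow> j < Suc n \<Longrightarrow> g (i,j) = g' (i,j)"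
  shows "cofactor (LB (Suc n) g) n j = cofactor (LB (Suc n) g') n j"
proof -
  have "mat_delete (LB (Suc n) g) n j = mat_delete (LB (Suc n) g') n j"
    by (rule eq_matI) (auto simp: LB_def mat_delete_def assms)
  then show ?thesis by (simp add: cofactor_def)
qed

lemma LB_expand:
  "det (LB (Suc n) g) = g (n,n) * det (LB n g) + (\<Sum>j<n. g (n,j) * cofactor (LB (Suc n) g) n j)"
proof -
  have "det (LB (Suc n) g) = (\<Sum>j<Suc n. LB (Suc n) g $$ (n,j) * cofactor (LB (Suc n) g) n j)"
    by (rule laplace_expansion_row[OF LB_carrier]) simp
  also have "\<dots> = (\<Sum>j<n. g (n,j) * cofactor (LB (Suc n) g) n j) + g (n,n) * cofactor (LB (Suc n) g) n n"
    by (simp add: LB_def)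
  also have "cofactor (LB (Suc n) g) n n = det (LB n g)"
    by (simp add: cofactor_def LB_delete)
  finally show ?thesis by simp
qed

lemma sets_Gs: "sets Gs = sets borel" by (simp add: complex_gaussian_def)

lemma comp_meas[measurable]: "(i,j) \<in> I \<Longrightarrow> (\<lambda>h. h (i,j)) \<in> borel_measurable (PiM I (\<lambda>_. Gs))"
  using measurable_component_singleton[of "(i,j)" I "\<lambda>_. Gs"]
  by (simp add: measurable_cong_sets[OF refl sets_Gs])

lemma meas_LB:
  assumes "n \<le> K" "K \<le> M"
  shows "(\<lambda>h. det (LB n h)) \<in> borel_measurable (channel_measure K M)"
  unfolding channel_measure_def
proof (rule meas_det[of _ n])
  fix i j assume "i < n" "j < n"
  then have "(i,j) \<in> {..<K} \<times> {..<M}" using assms by auto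
  then show "(\<lambda>h. LB n h $$ (i, j)) \<in> borel_measurable (PiM ({..<K} \<times> {..<M}) (\<lambda>_. Gs))"
    using \<open>i < n\<close> \<open>j < n\<close> by (simp add: LB_def)
qed simp

lemma LB_AE:
  assumes "n \<le> K" "K \<le> M"
  shows "AE h in channel_measure K M. det (LB n h) \<noteq> 0"
  using assms(1)
proof (induction n)
  case 0
  have "\<And>h. LB 0 h = 1\<^sub>m 0" by (rule eq_matI) (auto simp: LB_def)
  then show ?case by simp
next
  case (Suc n)
  let ?P = "channel_measure K M"
  let ?S = "{h \<in> space ?P. det (LB n h) \<noteq> 0 \<and> det (LB (Suc n) h) = 0}"
  note m1[measurable] = meas_LB[of n K M] and m2[measurable] = meas_LB[of "Suc n" K M]
  have eqS: "?S = ((\<lambda>h. det (LB n h)) -` (UNIV - {0}) \<inter> space ?P) \<inter> ((\<lambda>h. det (LB (Suc n) h)) -` {0} \<inter> space ?P)"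
    by auto
  have S: "?S \<in> sets ?P" unfolding eqS using Suc.prems assms
    by (intro sets.Int measurable_sets[OF m1] measurable_sets[OF m2]) auto
  have nn: "(n,n) \<in> {..<K} \<times> {..<M}" using Suc.prems assms by auto
  have sl: "x = y" if x: "h((n,n):=x) \<in> ?S" and y: "h((n,n):=y) \<in> ?S" for h x y
  proof -
    define c where "c = (\<Sum>j<n. h (n,j) * cofactor (LB (Suc n) h) n j)"
    have "\<And>z. det (LB n (h((n,n):=z))) = det (LB n h)"
      by (rule arg_cong[where f=det], rule eq_matI) (auto simp: LB_def)
    moreover have "\<And>z. det (LB (Suc n) (h((n,n):=z))) = z * det (LB n h) + c"
    proof -
      fix z
      have "(\<Sum>j<n. (h((n,n):=z)) (n,j) * cofactor (LB (Suc n) (h((n,n):=z))) n j) = c"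
        unfolding c_def
      proof (intro sum.cong refl)
        fix j assume "j \<in> {..<n}"
        moreover have "cofactor (LB (Suc n) (h((n,n):=z))) n j = cofactor (LB (Suc n) h) n j"
          by (rule LB_cof_cong) auto
        ultimately show "(h((n,n):=z)) (n,j) * cofactor (LB (Suc n) (h((n,n):=z))) n j = h (n,j) * cofactor (LB (Suc n) h) n j"
          by simp
      qed
      moreover have "det (LB n (h((n,n):=z))) = det (LB n h)"
        by (rule arg_cong[where f=det], rule eq_matI) (auto simp: LB_def)
      ultimately show "det (LB (Suc n) (h((n,n):=z))) = z * det (LB n h) + c"
        by (simp add: LB_expand)
    qed
    ultimately have "x * det (LB n h) + c = 0" "y * det (LB n h) + c = 0" "det (LB n h) \<noteq> 0"
      using x y by auto
    then show "x = y" by (metis add_right_cancel mult_cancel_right)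
  qed
  have "emeasure (PiM ({..<K} \<times> {..<M}) (\<lambda>_. Gs)) ?S = 0"
    apply (rule slice_null[OF _ nn])
      apply simp
    using S apply (simp add: channel_measure_def)
    apply (rule sl)
     apply assumption+
    done
  then have "emeasure ?P ?S = 0" by (simp add: channel_measure_def)
  then have "AE h in ?P. h \<notin> ?S" using S by (intro AE_not_in) auto
  moreover have "AE h in ?P. det (LB n h) \<noteq> 0" using Suc by auto
  moreover have "AE h in ?P. h \<in> space ?P" by (rule AE_space)
  ultimately show ?case by eventually_elim auto
qed


definition mm :: "nat \<Rightarrow> (nat\<Rightarrow>nat\<Rightarrow>complex) \<Rightarrow> (nat\<Rightarrow>nat\<Rightarrow>complex) \<Rightarrow> nat\<Rightarrow>nat\<Rightarrow>complex" where
  "mm n A B i j = (\<Sum>l<n. A i l * B l j)"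

definition adjf :: "(nat\<Rightarrow>nat\<Rightarrow>complex) \<Rightarrow> nat\<Rightarrow>nat\<Rightarrow>complex" where
  "adjf A i j = cnj (A j i)"

lemma mm_assoc: "mm n (mm m A B) C = mm m A (mm n B C)"
  unfolding mm_def by (auto simp: fun_eq_iff sum_distrib_left sum_distrib_right mult.assoc intro: sum.swap)

lemma adjf_mm: "adjf (mm n A B) = mm n (adjf B) (adjf A)"
  unfolding mm_def adjf_def by (auto simp: fun_eq_iff mult.commute)

lemma adjf_adjf[simp]: "adjf (adjf A) = A"
  unfolding adjf_def by auto

lemma mm_cong_left:
  assumes "\<And>l. l < n \<Longrightarrow> A i l = A' i l"
  shows "mm n A B i j = mm n A' B i j"
  unfolding mm_def using assms by auto

lemma mm_cong_right:
  assumes "\<And>l. l < n \<Longrightarrow> B l j = B' l j"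
  shows "mm n A B i j = mm n A B' i j"
  unfolding mm_def using assms by auto

lemma mm_id_left:
  assumes "\<And>l. l < n \<Longrightarrow> A i l = (if i = l then 1 else 0)" "i < n"
  shows "mm n A B i j = B i j"
proof -
  have "mm n A B i j = (\<Sum>l<n. if i = l then B l j else 0)"
    unfolding mm_def using assms(1) by (intro sum.cong) auto
  also have "\<dots> = B i j" using assms(2) by (simp add: sum.delta)
  finally show ?thesis .
qed

definition projP :: "nat \<Rightarrow> nat \<Rightarrow> (nat\<Rightarrow>nat\<Rightarrow>complex) \<Rightarrow> (nat\<Rightarrow>nat\<Rightarrow>complex) \<Rightarrow> nat\<Rightarrow>nat\<Rightarrow>complex" where
  "projP n M X C = mm n (mm n (adjf X) C) X"

lemma trace_projP:
  "(\<Sum>i<M. projP n M X C i i) = (\<Sum>p<n. mm n C (mm M X (adjf X)) p p)"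
proof -
  have "(\<Sum>i<M. projP n M X C i i) = (\<Sum>i<M. \<Sum>q<n. \<Sum>p<n. C p q * (X q i * cnj (X p i)))"
    unfolding projP_def mm_def adjf_def by (simp add: sum_distrib_left sum_distrib_right mult_ac)
  also have "\<dots> = (\<Sum>q<n. \<Sum>i<M. \<Sum>p<n. C p q * (X q i * cnj (X p i)))" by (rule sum.swap)
  also have "\<dots> = (\<Sum>q<n. \<Sum>p<n. \<Sum>i<M. C p q * (X q i * cnj (X p i)))" by (rule sum.cong[OF refl], rule sum.swap)
  also have "\<dots> = (\<Sum>p<n. \<Sum>q<n. \<Sum>i<M. C p q * (X q i * cnj (X p i)))" by (rule sum.swap)
  also have "\<dots> = (\<Sum>p<n. mm n C (mm M X (adjf X)) p p)"
    unfolding mm_def adjf_def by (simp add: sum_distrib_left)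
  finally show ?thesis .
qed

lemma projP_sq_adj:
  assumes CG: "\<And>p r. p < n \<Longrightarrow> r < n \<Longrightarrow> mm n C (mm M X (adjf X)) p r = (if p = r then 1 else 0)"
  shows "mm M (projP n M X C) (adjf (projP n M X C)) i j = adjf (projP n M X C) i j"
proof -
  define Z where "Z = mm n (adjf C) X"
  have aP: "adjf (projP n M X C) = mm n (adjf X) Z"
    unfolding projP_def Z_def by (simp add: adjf_mm mm_assoc)
  have "mm M (projP n M X C) (mm n (adjf X) Z) = mm n (adjf X) (mm n (mm n C (mm M X (adjf X))) Z)"
    unfolding projP_def by (simp add: mm_assoc)
  moreover have "mm n (adjf X) (mm n (mm n C (mm M X (adjf X))) Z) i j = mm n (adjf X) Z i j"
    by (rule mm_cong_right, rule mm_id_left) (auto simp: CG)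
  ultimately show ?thesis by (simp only: aP)
qed

lemma frob_Q:
  assumes CG: "\<And>p r. p < n \<Longrightarrow> r < n \<Longrightarrow> mm n C (mm M X (adjf X)) p r = (if p = r then 1 else 0)"
  shows "(\<Sum>i<M. \<Sum>j<M. (cmod ((if i = j then 1 else 0) - projP n M X C i j))\<^sup>2) = real M - real n"
proof -
  let ?P = "projP n M X C"
  define d :: "nat \<Rightarrow> nat \<Rightarrow> complex" where "d i j = (if i = j then 1 else 0)" for i j
  have e: "complex_of_real ((cmod (d i j - ?P i j))\<^sup>2) =
     d i j - d i j * ?P i j - d i j * cnj (?P i j) + ?P i j * cnj (?P i j)" for i j
    unfolding complex_norm_square d_def by (cases "i = j") (simp_all add: algebra_simps)
  have sd: "(\<Sum>j<M. d i j * Y j) = Y i" if "i < M" for i and Y :: "nat \<Rightarrow> complex"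
  proof -
    have "(\<Sum>j<M. d i j * Y j) = (\<Sum>j<M. if i = j then Y j else 0)" by (rule sum.cong) (auto simp: d_def)
    then show ?thesis using that by simp
  qed
  have sP: "(\<Sum>j<M. ?P i j * cnj (?P i j)) = cnj (?P i i)" for i
    using projP_sq_adj[OF CG, of i i] unfolding mm_def adjf_def by simp
  have "complex_of_real (\<Sum>i<M. \<Sum>j<M. (cmod (d i j - ?P i j))\<^sup>2)
     = (\<Sum>i<M. \<Sum>j<M. d i j - d i j * ?P i j - d i j * cnj (?P i j) + ?P i j * cnj (?P i j))"
    by (simp only: of_real_sum e)
  also have "\<dots> = (\<Sum>i<M. 1 - ?P i i - cnj (?P i i) + cnj (?P i i))"
  proof (rule sum.cong[OF refl])
    fix i assume i: "i \<in> {..<M}"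
    have "(\<Sum>j<M. d i j - d i j * ?P i j - d i j * cnj (?P i j) + ?P i j * cnj (?P i j))
       = (\<Sum>j<M. d i j * 1) - (\<Sum>j<M. d i j * ?P i j) - (\<Sum>j<M. d i j * cnj (?P i j)) + (\<Sum>j<M. ?P i j * cnj (?P i j))"
      by (simp add: sum.distrib sum_subtractf)
    also have "\<dots> = 1 - ?P i i - cnj (?P i i) + cnj (?P i i)"
    proof -
      have a1: "(\<Sum>j<M. d i j * 1) = 1" using sd[of i "\<lambda>_. 1"] i by simp
      have a2: "(\<Sum>j<M. d i j * ?P i j) = ?P i i" using sd[of i "\<lambda>j. ?P i j"] i by simp
      have a3: "(\<Sum>j<M. d i j * cnj (?P i j)) = cnj (?P i i)" using sd[of i "\<lambda>j. cnj (?P i j)"] i by simp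
      show ?thesis by (simp only: a1 a2 a3 sP)
    qed
    finally show "(\<Sum>j<M. d i j - d i j * ?P i j - d i j * cnj (?P i j) + ?P i j * cnj (?P i j))
       = 1 - ?P i i - cnj (?P i i) + cnj (?P i i)" .
  qed
  also have "\<dots> = of_nat M - (\<Sum>i<M. ?P i i)" by (simp add: sum_subtractf)
  also have "(\<Sum>i<M. ?P i i) = of_nat n" unfolding trace_projP by (simp add: CG)
  finally have "complex_of_real (\<Sum>i<M. \<Sum>j<M. (cmod (d i j - ?P i j))\<^sup>2) = complex_of_real (real M - real n)"
    by simp
  then show ?thesis unfolding d_def of_real_eq_iff .
qed

lemma projP_cnj_perp:
  assumes G0: "\<And>p. p < n \<Longrightarrow> (\<Sum>i<M. X p i * \<phi> i) = 0"
  shows "(\<Sum>i<M. cnj (projP n M X C i j) * \<phi> i) = 0"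
proof -
  have "(\<Sum>i<M. cnj (projP n M X C i j) * \<phi> i)
      = (\<Sum>i<M. \<Sum>q<n. \<Sum>p<n. (cnj (C p q) * cnj (X q j)) * (X p i * \<phi> i))"
    unfolding projP_def mm_def adjf_def by (simp add: sum_distrib_left sum_distrib_right mult_ac)
  also have "\<dots> = (\<Sum>q<n. \<Sum>i<M. \<Sum>p<n. (cnj (C p q) * cnj (X q j)) * (X p i * \<phi> i))"
    by (rule sum.swap)
  also have "\<dots> = (\<Sum>q<n. \<Sum>p<n. \<Sum>i<M. (cnj (C p q) * cnj (X q j)) * (X p i * \<phi> i))"
    by (rule sum.cong[OF refl], rule sum.swap)
  also have "\<dots> = (\<Sum>q<n. \<Sum>p<n. (cnj (C p q) * cnj (X q j)) * (\<Sum>i<M. X p i * \<phi> i))"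
    by (simp add: sum_distrib_left)
  also have "\<dots> = 0" by (simp add: G0)
  finally show ?thesis .
qed

lemma bound_CS:
  fixes X C :: "nat\<Rightarrow>nat\<Rightarrow>complex" and a \<phi> :: "nat \<Rightarrow> complex"
  assumes G0: "\<And>p. p < n \<Longrightarrow> (\<Sum>i<M. X p i * \<phi> i) = 0"
    and A1: "(\<Sum>j<M. cnj (a j) * \<phi> j) = 1"
  shows "1 \<le> (\<Sum>i<M. (cmod (\<Sum>j<M. ((if i = j then 1 else 0) - projP n M X C i j) * a j))\<^sup>2)
              * (\<Sum>j<M. (cmod (\<phi> j))\<^sup>2)"
proof -
  let ?P = "projP n M X C"
  define r where "r i = (\<Sum>j<M. ((if i = j then 1 else 0) - ?P i j) * a j)" for i
  have r: "r i = a i - (\<Sum>j<M. ?P i j * a j)" if "i < M" for i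
  proof -
    have "r i = (\<Sum>j<M. (if i = j then a j else 0) - ?P i j * a j)"
      unfolding r_def by (rule sum.cong) (auto simp: left_diff_distrib)
    also have "\<dots> = (\<Sum>j<M. (if i = j then a j else 0)) - (\<Sum>j<M. ?P i j * a j)"
      by (rule sum_subtractf)
    finally have "r i = (\<Sum>j<M. (if i = j then a j else 0)) - (\<Sum>j<M. ?P i j * a j)" .
    then show ?thesis using that by simp
  qed
  have "(\<Sum>i<M. cnj (r i) * \<phi> i) = (\<Sum>i<M. cnj (a i) * \<phi> i) - (\<Sum>i<M. cnj (\<Sum>j<M. ?P i j * a j) * \<phi> i)"
    by (simp add: r left_diff_distrib sum_subtractf)
  also have "(\<Sum>i<M. cnj (\<Sum>j<M. ?P i j * a j) * \<phi> i) = (\<Sum>i<M. \<Sum>j<M. cnj (a j) * (cnj (?P i j) * \<phi> i))"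
    by (simp add: sum_distrib_right sum_distrib_left mult_ac)
  also have "\<dots> = (\<Sum>j<M. \<Sum>i<M. cnj (a j) * (cnj (?P i j) * \<phi> i))" by (rule sum.swap)
  also have "\<dots> = (\<Sum>j<M. cnj (a j) * (\<Sum>i<M. cnj (?P i j) * \<phi> i))" by (simp add: sum_distrib_left)
  also have "\<dots> = 0" by (simp add: projP_cnj_perp[OF G0])
  finally have one: "(\<Sum>i<M. cnj (r i) * \<phi> i) = 1" using A1 by simp
  have "1 = cmod (\<Sum>i<M. cnj (r i) * \<phi> i)" using one by simp
  also have "\<dots> \<le> (\<Sum>i<M. cmod (r i) * cmod (\<phi> i))"
    by (rule order_trans[OF norm_sum]) (simp add: norm_mult)
  finally have "1 \<le> (\<Sum>i<M. cmod (r i) * cmod (\<phi> i))" .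
  then have "1 \<le> (\<Sum>i<M. cmod (r i) * cmod (\<phi> i))\<^sup>2"
    by (simp add: one_le_power)
  also have "\<dots> \<le> (\<Sum>i<M. (cmod (r i))\<^sup>2) * (\<Sum>i<M. (cmod (\<phi> i))\<^sup>2)"
    by (rule Cauchy_Schwarz_ineq_sum)
  finally show ?thesis unfolding r_def .
qed


lemma mat_adjoint_index:
  fixes A :: "complex mat"
  assumes "A \<in> carrier_mat n m"
  shows "mat_adjoint A = mat m n (\<lambda>(i,j). cnj (A $$ (j,i)))"
  using assms unfolding mat_adjoint_def
  by (intro eq_matI) (auto simp: mat_of_rows_index)

lemma mat_adjoint_carrier: fixes A :: "complex mat" assumes "A \<in> carrier_mat n m" shows "mat_adjoint A \<in> carrier_mat m n"
  using mat_adjoint_index[OF assms] by simp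

definition GramF :: "nat \<Rightarrow> nat \<Rightarrow> (nat\<Rightarrow>nat\<Rightarrow>complex) \<Rightarrow> complex mat" where
  "GramF n M X = mat n n (\<lambda>(p,q). mm M X (adjf X) p q)"

lemma GramF_det_nz:
  assumes ind: "\<And>c. (\<And>j. j < M \<Longrightarrow> (\<Sum>p<n. c p * X p j) = 0) \<Longrightarrow> (\<forall>p<n. c p = 0)"
  shows "det (GramF n M X) \<noteq> 0"
proof
  assume "det (GramF n M X) = 0"
  then obtain v where v: "v \<in> carrier_vec n" "v \<noteq> 0\<^sub>v n" "GramF n M X *\<^sub>v v = 0\<^sub>v n"
    using det_0_iff_vec_prod_zero[of "GramF n M X" n] by (auto simp: GramF_def)
  define w where "w l = (\<Sum>q<n. v $ q * cnj (X q l))" for l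
  have Av: "(\<Sum>q<n. mm M X (adjf X) p q * v $ q) = 0" if "p < n" for p
  proof -
    have "(GramF n M X *\<^sub>v v) $ p = 0" using v(3) that by simp
    then show ?thesis using that v(1) by (simp add: GramF_def scalar_prod_def atLeast0LessThan)
  qed
  have "(\<Sum>p<n. cnj (v $ p) * (\<Sum>q<n. mm M X (adjf X) p q * v $ q)) = 0"
    by (simp add: Av)
  moreover have "(\<Sum>p<n. cnj (v $ p) * (\<Sum>q<n. mm M X (adjf X) p q * v $ q))
     = (\<Sum>l<M. cnj (w l) * w l)"
  proof -
    have "(\<Sum>p<n. cnj (v $ p) * (\<Sum>q<n. mm M X (adjf X) p q * v $ q))
       = (\<Sum>p<n. \<Sum>q<n. \<Sum>l<M. (cnj (v $ p) * X p l) * (v $ q * cnj (X q l)))"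
      unfolding mm_def adjf_def by (simp add: sum_distrib_left sum_distrib_right mult_ac)
    also have "\<dots> = (\<Sum>p<n. \<Sum>l<M. \<Sum>q<n. (cnj (v $ p) * X p l) * (v $ q * cnj (X q l)))"
      by (rule sum.cong[OF refl], rule sum.swap)
    also have "\<dots> = (\<Sum>l<M. \<Sum>p<n. \<Sum>q<n. (cnj (v $ p) * X p l) * (v $ q * cnj (X q l)))"
      by (rule sum.swap)
    also have "\<dots> = (\<Sum>l<M. \<Sum>q<n. \<Sum>p<n. (cnj (v $ p) * X p l) * (v $ q * cnj (X q l)))"
      by (rule sum.cong[OF refl], rule sum.swap)
    also have "\<dots> = (\<Sum>l<M. cnj (w l) * w l)"
      unfolding w_def by (simp add: sum_distrib_left sum_distrib_right)
    finally show ?thesis .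
  qed
  ultimately have s0: "(\<Sum>l<M. cnj (w l) * w l) = 0" by simp
  have eq: "complex_of_real ((cmod (w l))\<^sup>2) = cnj (w l) * w l" for l
    by (subst complex_norm_square) (simp add: mult.commute)
  have "(\<Sum>l<M. complex_of_real ((cmod (w l))\<^sup>2)) = 0"
    unfolding eq by (rule s0)
  then have "(\<Sum>l<M. (cmod (w l))\<^sup>2) = 0"
    by (metis of_real_eq_0_iff of_real_sum)
  then have w0: "w l = 0" if "l < M" for l
    using that by (subst (asm) sum_nonneg_eq_0_iff) auto
  have "(\<Sum>p<n. cnj (v $ p) * X p j) = 0" if "j < M" for j
  proof -
    have "(\<Sum>p<n. cnj (v $ p) * X p j) = cnj (w j)"
      unfolding w_def by (simp add: mult.commute)
    then show ?thesis using w0 that by simp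
  qed
  then have "\<forall>p<n. cnj (v $ p) = 0" by (rule ind)
  then have "v = 0\<^sub>v n" using v(1) by (intro eq_vecI) auto
  then show False using v(2) by simp
qed


definition skp :: "nat \<Rightarrow> nat \<Rightarrow> nat" where "skp k p = (if p < k then p else Suc p)"

definition Xk :: "nat \<Rightarrow> nat \<Rightarrow> nat \<Rightarrow> (nat\<times>nat \<Rightarrow> complex) \<Rightarrow> nat \<Rightarrow> nat \<Rightarrow> complex" where
  "Xk K M k h p j = (if p < K - 1 \<and> j < M then h (skp k p, j) else 0)"

definition GramK where "GramK K M k h = GramF (K-1) M (Xk K M k h)"

definition Ck :: "nat \<Rightarrow> nat \<Rightarrow> nat \<Rightarrow> (nat\<times>nat \<Rightarrow> complex) \<Rightarrow> nat \<Rightarrow> nat \<Rightarrow> complex" where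
  "Ck K M k h p q = adj_mat (GramK K M k h) $$ (p,q) / det (GramK K M k h)"

definition Pk where "Pk K M k h = projP (K-1) M (Xk K M k h) (Ck K M k h)"

definition Dk :: "nat \<Rightarrow> nat \<Rightarrow> nat \<Rightarrow> (nat\<times>nat \<Rightarrow> complex) \<Rightarrow> real" where
  "Dk K M k h = (\<Sum>i<M. (cmod (\<Sum>j<M. ((if i = j then 1 else 0) - Pk K M k h i j) * cnj (h (k,j))))\<^sup>2)"

definition Tk :: "nat \<Rightarrow> nat \<Rightarrow> nat \<Rightarrow> (nat\<times>nat \<Rightarrow> complex) \<Rightarrow> real" where
  "Tk K M k h = (\<Sum>i<M. \<Sum>j<M. (cmod ((if i = j then 1 else 0) - Pk K M k h i j))\<^sup>2)"

lemma GramF_carrier[simp]: "GramF n M X \<in> carrier_mat n n" by (simp add: GramF_def)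

lemma Ck_inv:
  assumes d: "det (GramK K M k h) \<noteq> 0" and p: "p < K - 1" and r: "r < K - 1"
  shows "mm (K-1) (Ck K M k h) (mm M (Xk K M k h) (adjf (Xk K M k h))) p r = (if p = r then 1 else 0)"
proof -
  let ?n = "K - 1" and ?G = "GramK K M k h"
  have G: "?G \<in> carrier_mat ?n ?n" by (simp add: GramK_def)
  have "(adj_mat ?G * ?G) $$ (p,r) = (det ?G \<cdot>\<^sub>m 1\<^sub>m ?n) $$ (p,r)" using adj_mat(3)[OF G] by simp
  then have "(\<Sum>q<?n. adj_mat ?G $$ (p,q) * ?G $$ (q,r)) = det ?G * (if p = r then 1 else 0)"
    using p r G adj_mat(1)[OF G] by (simp add: scalar_prod_def atLeast0LessThan)
  moreover have "(\<Sum>q<?n. adj_mat ?G $$ (p,q) * ?G $$ (q,r)) =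
      (\<Sum>q<?n. adj_mat ?G $$ (p,q) * mm M (Xk K M k h) (adjf (Xk K M k h)) q r)"
    using r by (intro sum.cong refl) (simp add: GramK_def GramF_def)
  ultimately have S: "(\<Sum>q<?n. adj_mat ?G $$ (p,q) * mm M (Xk K M k h) (adjf (Xk K M k h)) q r)
      = det ?G * (if p = r then 1 else 0)" by simp
  have "mm (K-1) (Ck K M k h) (mm M (Xk K M k h) (adjf (Xk K M k h))) p r
     = (\<Sum>q<?n. adj_mat ?G $$ (p,q) * mm M (Xk K M k h) (adjf (Xk K M k h)) q r) / det ?G"
    unfolding mm_def[of "K-1"] Ck_def by (simp add: sum_divide_distrib)
  also have "\<dots> = (if p = r then 1 else 0)" using S d by simp
  finally show ?thesis .
qed

lemma projP_zero: "projP n M X (\<lambda>_ _. 0) = (\<lambda>_ _. 0)"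
  unfolding projP_def mm_def by (auto simp: fun_eq_iff)

lemma Tk_val: "Tk K M k h = (if det (GramK K M k h) \<noteq> 0 then real M - real (K - 1) else real M)"
proof (cases "det (GramK K M k h) = 0")
  case True
  then have "Ck K M k h = (\<lambda>_ _. 0)" by (auto simp: Ck_def fun_eq_iff)
  then have "Pk K M k h = (\<lambda>_ _. 0)" by (simp add: Pk_def projP_zero)
  then have "Tk K M k h = (\<Sum>i<M. \<Sum>j<M. if i = j then 1 else 0)" 
    unfolding Tk_def by (intro sum.cong refl) auto
  also have "\<dots> = real M" by simp
  finally show ?thesis using True by simp
next
  case False
  have "Tk K M k h = real M - real (K-1)"
    unfolding Tk_def Pk_def by (rule frob_Q, rule Ck_inv[OF False])
  then show ?thesis using False by simp
qed

lemma rows_indep_LB: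
  assumes d: "det (LB K h) \<noteq> 0" and KM: "K \<le> M"
    and c: "\<And>j. j < M \<Longrightarrow> (\<Sum>i<K. c i * h (i,j)) = 0"
  shows "\<forall>i<K. c i = 0"
proof -
  have dT: "det (transpose_mat (LB K h)) \<noteq> 0" using d det_transpose[OF LB_carrier] by simp
  have "transpose_mat (LB K h) *\<^sub>v vec K c = 0\<^sub>v K"
  proof (rule eq_vecI)
    fix j assume j: "j < dim_vec (0\<^sub>v K :: complex vec)"
    then have "j < M" using KM by simp
    then show "(transpose_mat (LB K h) *\<^sub>v vec K c) $ j = 0\<^sub>v K $ j"
      using j c[of j] by (simp add: LB_def scalar_prod_def atLeast0LessThan mult.commute)
  qed (simp add: LB_def)
  note Tv = this
  have cv: "vec K c \<in> carrier_vec K" by simp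
  have eq: "det (transpose_mat (LB K h)) = 0 \<longleftrightarrow> (\<exists>v. v \<in> carrier_vec K \<and> v \<noteq> 0\<^sub>v K \<and> transpose_mat (LB K h) *\<^sub>v v = 0\<^sub>v K)"
    by (rule det_0_iff_vec_prod_zero) (simp add: LB_def)
  have "vec K c = 0\<^sub>v K" using eq dT Tv cv by blast
  then show ?thesis by (metis index_vec index_zero_vec(1))
qed

lemma skp_lt: "k < K \<Longrightarrow> p < K - 1 \<Longrightarrow> skp k p < K" by (auto simp: skp_def)
lemma skp_ne: "skp k p \<noteq> k" by (auto simp: skp_def)
lemma skp_inj: "inj (skp k)" unfolding inj_def skp_def by auto

lemma skp_image: "k < K \<Longrightarrow> skp k ` {..<K - 1} = {..<K} - {k}"
proof (intro equalityI subsetI)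
  fix i assume "k < K" "i \<in> {..<K} - {k}"
  then show "i \<in> skp k ` {..<K - 1}"
    by (cases "i < k") (auto simp: skp_def image_iff intro!: bexI[of _ "i - 1"])
qed (auto simp: skp_def)

lemma Xk_indep:
  assumes k: "k < K"
    and ind: "\<And>c. (\<And>j. j < M \<Longrightarrow> (\<Sum>i<K. c i * h (i,j)) = 0) \<Longrightarrow> \<forall>i<K. c i = 0"
    and c: "\<And>j. j < M \<Longrightarrow> (\<Sum>p<K - 1. c p * Xk K M k h p j) = 0"
  shows "\<forall>p<K - 1. c p = 0"
proof -
  define c' where "c' i = (if i = k then 0 else c (if i < k then i else i - 1))" for i
  have c'skp: "c' (skp k p) = c p" for p by (auto simp: c'_def skp_def)
  have "(\<Sum>i<K. c' i * h (i,j)) = 0" if j: "j < M" for j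
  proof -
    have "(\<Sum>i<K. c' i * h (i,j)) = (\<Sum>i\<in>{..<K} - {k}. c' i * h (i,j))"
      using k by (subst sum.remove[of _ k]) (auto simp: c'_def)
    also have "\<dots> = (\<Sum>p<K-1. c' (skp k p) * h (skp k p, j))"
    proof -
      have "(\<Sum>i\<in>{..<K} - {k}. c' i * h (i,j)) = (\<Sum>i\<in>skp k ` {..<K-1}. c' i * h (i,j))"
        using skp_image[OF k] by simp
      also have "\<dots> = (\<Sum>p<K-1. c' (skp k p) * h (skp k p, j))"
        using inj_on_subset[OF skp_inj[of k], of "{..<K-1}"] by (simp add: sum.reindex)
      finally show ?thesis .
    qed
    also have "\<dots> = (\<Sum>p<K-1. c p * Xk K M k h p j)"
      using j by (intro sum.cong refl) (simp add: c'skp Xk_def)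
    also have "\<dots> = 0" using c j by simp
    finally show ?thesis .
  qed
  then have "\<forall>i<K. c' i = 0" by (rule ind)
  then show ?thesis using skp_lt[OF k] c'skp by metis
qed

lemma channel_mat_carrier[simp]: "channel_mat K M h \<in> carrier_mat K M"
  by (simp add: channel_mat_def)

lemma H_gram: "channel_mat K M h * mat_adjoint (channel_mat K M h) = GramF K M (\<lambda>p j. h (p,j))"
  unfolding mat_adjoint_index[OF channel_mat_carrier]
  by (rule eq_matI)
     (auto simp: GramF_def mm_def adjf_def channel_mat_def scalar_prod_def atLeast0LessThan)

lemma good_bound:
  assumes k: "k < K" and KM: "K \<le> M" and d: "det (LB K h) \<noteq> 0"
  shows "1 \<le> Dk K M k h * vec_norm_sq (col (zf_precoder (channel_mat K M h)) k)"
proof -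
  let ?H = "channel_mat K M h"
  let ?A = "?H * mat_adjoint ?H"
  have ind: "\<forall>i<K. c i = 0" if "\<And>j. j < M \<Longrightarrow> (\<Sum>i<K. c i * h (i,j)) = 0" for c
    by (rule rows_indep_LB[OF d KM that])
  have dA: "det ?A \<noteq> 0" unfolding H_gram
    by (rule GramF_det_nz) (use ind in auto)
  have Acar: "?A \<in> carrier_mat K K" unfolding H_gram by simp
  have un: "?A \<in> Units (ring_mat TYPE(complex) K (undefined::unit))"
    by (rule det_non_zero_imp_unit[OF Acar dA])
  have "mat_inverse ?A \<noteq> None" using mat_inverse(1)[OF Acar, where b="undefined::unit"] un by blast
  then obtain B where B: "mat_inverse ?A = Some B" by auto
  have AB: "?A * B = 1\<^sub>m K" and Bc: "B \<in> carrier_mat K K" using mat_inverse(2)[OF Acar B] by auto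
  define F where "F = zf_precoder ?H"
  have F: "F = mat_adjoint ?H * B" unfolding F_def zf_precoder_def B by simp
  have Hc: "mat_adjoint ?H \<in> carrier_mat M K" by (rule mat_adjoint_carrier) simp
  have Fc: "F \<in> carrier_mat M K" unfolding F using Hc Bc by simp
  have HF: "?H * F = 1\<^sub>m K" unfolding F
    using assoc_mult_mat[OF channel_mat_carrier Hc Bc] AB by simp
  define \<phi> where "\<phi> j = F $$ (j,k)" for j
  have HFe: "(\<Sum>j<M. h (i,j) * \<phi> j) = (if i = k then 1 else 0)" if i: "i < K" for i
  proof -
    have "(?H * F) $$ (i,k) = (if i = k then 1 else 0)" using HF i k by simp
    then show ?thesis using i k Fc
      by (simp add: \<phi>_def channel_mat_def scalar_prod_def atLeast0LessThan)
  qed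
  have G0: "(\<Sum>i<M. Xk K M k h p i * \<phi> i) = 0" if p: "p < K - 1" for p
  proof -
    have "(\<Sum>i<M. Xk K M k h p i * \<phi> i) = (\<Sum>i<M. h (skp k p, i) * \<phi> i)"
      using p by (intro sum.cong refl) (simp add: Xk_def)
    also have "\<dots> = 0" using HFe[OF skp_lt[OF k p]] skp_ne[of k p] by simp
    finally show ?thesis .
  qed
  have A1: "(\<Sum>j<M. cnj (cnj (h (k,j))) * \<phi> j) = 1" using HFe[OF k] by simp
  have "1 \<le> (\<Sum>i<M. (cmod (\<Sum>j<M. ((if i = j then 1 else 0) - projP (K-1) M (Xk K M k h) (Ck K M k h) i j) * cnj (h (k,j))))\<^sup>2)
              * (\<Sum>j<M. (cmod (\<phi> j))\<^sup>2)"
    by (rule bound_CS[OF G0 A1])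
  moreover have "vec_norm_sq (col F k) = (\<Sum>j<M. (cmod (\<phi> j))\<^sup>2)"
    using Fc k by (simp add: vec_norm_sq_def \<phi>_def)
  ultimately show ?thesis unfolding F_def[symmetric] Dk_def Pk_def by simp
qed


lemma meas_cnj_comp:
  "f \<in> borel_measurable N \<Longrightarrow> (\<lambda>x. cnj (f x :: complex)) \<in> borel_measurable N"
  by (erule measurable_compose) (rule CG_meas_cnj)

lemma meas_Xk:
  assumes k: "k < K"
  shows "(\<lambda>h. Xk K M k h p j) \<in> borel_measurable (channel_measure K M)"
proof (cases "p < K - 1 \<and> j < M")
  case True
  then have "(skp k p, j) \<in> {..<K} \<times> {..<M}" using skp_lt[OF k] by auto
  then have "(\<lambda>h. h (skp k p, j)) \<in> borel_measurable (channel_measure K M)"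
    unfolding channel_measure_def by (rule comp_meas)
  then show ?thesis using True by (simp add: Xk_def)
next
  case False
  then have "(\<lambda>h. Xk K M k h p j) = (\<lambda>h. 0)" by (auto simp: Xk_def fun_eq_iff)
  then show ?thesis by simp
qed

lemma meas_Gram_entry:
  assumes k: "k < K" and p: "p < K - 1" and q: "q < K - 1"
  shows "(\<lambda>h. GramK K M k h $$ (p,q)) \<in> borel_measurable (channel_measure K M)"
proof -
  have e: "(\<lambda>h. GramK K M k h $$ (p,q)) = (\<lambda>h. \<Sum>l<M. Xk K M k h p l * cnj (Xk K M k h q l))"
    using p q by (simp add: GramK_def GramF_def mm_def adjf_def)
  show ?thesis unfolding e
    by (intro borel_measurable_sum borel_measurable_times meas_cnj_comp meas_Xk[OF k])
qed

lemma meas_norm_comp: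
  "f \<in> borel_measurable N \<Longrightarrow> (\<lambda>x. norm (f x :: complex)) \<in> borel_measurable N"
  by (erule measurable_compose) (rule borel_measurable_norm)

lemma dimG[simp]: "dim_row (GramK K M k h) = K - 1" "dim_col (GramK K M k h) = K - 1"
  by (simp_all add: GramK_def GramF_def)

lemma GramK_carrier[simp]: "GramK K M k h \<in> carrier_mat (K - 1) (K - 1)"
  unfolding GramK_def by (rule GramF_carrier)

lemma adj_index: "A \<in> carrier_mat n n \<Longrightarrow> p < n \<Longrightarrow> q < n \<Longrightarrow> adj_mat A $$ (p,q) = cofactor A q p"
  unfolding adj_mat_def by auto

lemma meas_detG:
  assumes k: "k < K"
  shows "(\<lambda>h. det (GramK K M k h)) \<in> borel_measurable (channel_measure K M)"
proof (rule meas_det[of _ "K-1"])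
  show "GramK K M k h \<in> carrier_mat (K - 1) (K - 1)" for h by (rule GramK_carrier)
  fix i j assume "i < K - 1" "j < K - 1"
  then show "(\<lambda>h. GramK K M k h $$ (i, j)) \<in> borel_measurable (channel_measure K M)"
    by (rule meas_Gram_entry[OF k])
qed

lemma meas_Ck:
  assumes k: "k < K" and p: "p < K - 1" and q: "q < K - 1"
  shows "(\<lambda>h. Ck K M k h p q) \<in> borel_measurable (channel_measure K M)"
proof -
  have e: "(\<lambda>h. Ck K M k h p q) = (\<lambda>h. ((-1)^(q+p) * det (mat_delete (GramK K M k h) q p)) / det (GramK K M k h))"
  proof
    fix h
    show "Ck K M k h p q = ((-1)^(q+p) * det (mat_delete (GramK K M k h) q p)) / det (GramK K M k h)"
      unfolding Ck_def adj_index[OF GramK_carrier p q] cofactor_def ..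
  qed
  have md: "(\<lambda>h. det (mat_delete (GramK K M k h) q p)) \<in> borel_measurable (channel_measure K M)"
  proof (rule meas_det[of _ "K - 1 - 1"])
    show "mat_delete (GramK K M k h) q p \<in> carrier_mat (K - 1 - 1) (K - 1 - 1)" for h
      by (rule mat_delete_carrier) (rule GramK_carrier)
    fix i j assume i: "i < K - 1 - 1" and j: "j < K - 1 - 1"
    show "(\<lambda>h. mat_delete (GramK K M k h) q p $$ (i, j)) \<in> borel_measurable (channel_measure K M)"
    proof -
      define i' where "i' = (if i < q then i else Suc i)"
      define j' where "j' = (if j < p then j else Suc j)"
      have i': "i' < K - 1" and j': "j' < K - 1" using i j by (auto simp: i'_def j'_def)
      have "(\<lambda>h. mat_delete (GramK K M k h) q p $$ (i, j)) = (\<lambda>h. GramK K M k h $$ (i', j'))"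
        using i j unfolding mat_delete_def i'_def j'_def by (intro ext) simp
      then show ?thesis using meas_Gram_entry[OF k i' j'] by simp
    qed
  qed
  show ?thesis unfolding e
    by (intro borel_measurable_divide borel_measurable_times borel_measurable_const md meas_detG[OF k])
qed

lemma meas_Pk:
  assumes k: "k < K"
  shows "(\<lambda>h. Pk K M k h i j) \<in> borel_measurable (channel_measure K M)"
proof -
  have e: "(\<lambda>h. Pk K M k h i j) = (\<lambda>h. \<Sum>q<K-1. (\<Sum>p<K-1. cnj (Xk K M k h p i) * Ck K M k h p q) * Xk K M k h q j)"
    by (simp add: Pk_def projP_def mm_def adjf_def)
  show ?thesis unfolding e
  proof (intro borel_measurable_sum borel_measurable_times meas_cnj_comp meas_Xk[OF k])
    fix q p assume "q \<in> {..<K-1}" "p \<in> {..<K-1}"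
    then show "(\<lambda>h. Ck K M k h p q) \<in> borel_measurable (channel_measure K M)"
      by (intro meas_Ck[OF k]) auto
  qed
qed

lemma meas_Dk:
  assumes k: "k < K"
  shows "(\<lambda>h. Dk K M k h) \<in> borel_measurable (channel_measure K M)"
proof -
  have hk: "(\<lambda>h. h (k,j)) \<in> borel_measurable (channel_measure K M)" if "j < M" for j
    unfolding channel_measure_def using k that by (intro comp_meas) auto
  show ?thesis unfolding Dk_def
    by (intro borel_measurable_sum borel_measurable_power meas_norm_comp
        borel_measurable_times borel_measurable_diff borel_measurable_const meas_Pk[OF k]
        meas_cnj_comp hk) auto
qed

lemma meas_Tk:
  assumes k: "k < K"
  shows "(\<lambda>h. Tk K M k h) \<in> borel_measurable (channel_measure K M)"
  unfolding Tk_def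
  by (intro borel_measurable_sum borel_measurable_power meas_norm_comp
        borel_measurable_diff borel_measurable_const meas_Pk[OF k])

lemma AE_good:
  assumes "K \<le> M"
  shows "AE h in channel_measure K M. det (LB K h) \<noteq> 0"
  using LB_AE[of K K M] assms by simp

lemma good_detG:
  assumes k: "k < K" and KM: "K \<le> M" and d: "det (LB K h) \<noteq> 0"
  shows "det (GramK K M k h) \<noteq> 0"
  unfolding GramK_def
proof (rule GramF_det_nz)
  fix c assume c: "\<And>j. j < M \<Longrightarrow> (\<Sum>p<K - 1. c p * Xk K M k h p j) = 0"
  have ind: "\<forall>i<K. c i = 0" if "\<And>j. j < M \<Longrightarrow> (\<Sum>i<K. c i * h (i,j)) = 0" for c
    by (rule rows_indep_LB[OF d KM that])
  show "\<forall>p<K - 1. c p = 0" by (rule Xk_indep[OF k ind c])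
qed


lemma Pk_Xk: "Xk K M k g = Xk K M k g' \<Longrightarrow> Pk K M k g = Pk K M k g'"
  unfolding Pk_def Ck_def GramK_def by simp

lemma Tk_Xk: "Xk K M k g = Xk K M k g' \<Longrightarrow> Tk K M k g = Tk K M k g'"
  unfolding Tk_def by (simp add: Pk_Xk[of K M k g g'])

lemma prob_PiM_Gs: "prob_space (PiM I (\<lambda>_. Gs))"
  by (rule prob_space_PiM) (rule prob_CG)

lemma Dk_Tk_integral:
  assumes k: "k < K" and KM: "K \<le> M"
  shows "(\<integral>\<^sup>+ h. ennreal (Dk K M k h) \<partial>channel_measure K M) = (\<integral>\<^sup>+ h. ennreal (Tk K M k h) \<partial>channel_measure K M)"
proof -
  define I where "I = {..<K} \<times> {..<M}"
  define R where "R = {k} \<times> {..<M}"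
  define J where "J = I - R"
  have IJR: "I = J \<union> R" using k unfolding I_def J_def R_def by auto
  have disj: "J \<inter> R = {}" and fJ: "finite J" and fR: "finite R"
    unfolding J_def R_def I_def by auto
  have mu: "channel_measure K M = PiM (J \<union> R) (\<lambda>_. Gs)"
    unfolding channel_measure_def I_def[symmetric] IJR ..
  have XM: "Xk K M k (merge J R (x, y)) = Xk K M k (merge J R (x, undefined))" for x y
  proof (intro ext)
    fix p j
    show "Xk K M k (merge J R (x, y)) p j = Xk K M k (merge J R (x, undefined)) p j"
    proof (cases "p < K - 1 \<and> j < M")
      case True
      then have "(skp k p, j) \<in> J"
        using skp_lt[OF k] skp_ne[of k p] unfolding J_def I_def R_def by auto
      then show ?thesis using True disj by (simp add: Xk_def)
    qed (auto simp: Xk_def)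
  qed
  have yk: "merge J R (x, y) (k, j) = y (k, j)" if "j < M" for x y j
    using that disj by (simp add: R_def)
  have inner_D: "(\<integral>\<^sup>+ y. ennreal (Dk K M k (merge J R (x, y))) \<partial>PiM R (\<lambda>_. Gs))
      = ennreal (Tk K M k (merge J R (x, undefined)))" for x
  proof -
    define c where "c i j = (if i = j then 1 else 0) - Pk K M k (merge J R (x, undefined)) i j" for i j
    have De: "Dk K M k (merge J R (x, y)) = (\<Sum>i<M. (cmod (\<Sum>j<M. c i j * cnj (y (k, j))))\<^sup>2)" for y
      unfolding Dk_def c_def Pk_Xk[OF XM[of x y]] by (intro sum.cong refl) (simp add: yk)
    have \<iota>: "inj_on (\<lambda>j. (k, j)) {..<M}" "(\<lambda>j. (k, j)) ` {..<M} \<subseteq> R"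
      unfolding R_def by (auto simp: inj_on_def)
    have ii: "integrable (PiM R (\<lambda>_. Gs)) (\<lambda>y. (cmod (\<Sum>j<M. c i j * cnj (y (k, j))))\<^sup>2)" for i
      using PiM_quad(1)[OF fR \<iota>, of "c i"] by simp
    have iv: "(\<integral>y. (cmod (\<Sum>j<M. c i j * cnj (y (k, j))))\<^sup>2 \<partial>PiM R (\<lambda>_. Gs)) = (\<Sum>j<M. (cmod (c i j))\<^sup>2)" for i
      using PiM_quad(2)[OF fR \<iota>, of "c i"] by simp
    have "(\<integral>\<^sup>+ y. ennreal (Dk K M k (merge J R (x, y))) \<partial>PiM R (\<lambda>_. Gs))
        = (\<integral>\<^sup>+ y. ennreal (\<Sum>i<M. (cmod (\<Sum>j<M. c i j * cnj (y (k, j))))\<^sup>2) \<partial>PiM R (\<lambda>_. Gs))"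
      by (simp add: De)
    also have "\<dots> = ennreal (\<integral>y. (\<Sum>i<M. (cmod (\<Sum>j<M. c i j * cnj (y (k, j))))\<^sup>2) \<partial>PiM R (\<lambda>_. Gs))"
      by (rule nn_integral_eq_integral) (auto intro!: Bochner_Integration.integrable_sum ii sum_nonneg)
    also have "\<dots> = ennreal (\<Sum>i<M. \<Sum>j<M. (cmod (c i j))\<^sup>2)"
      by (simp add: Bochner_Integration.integral_sum[OF ii] iv)
    also have "\<dots> = ennreal (Tk K M k (merge J R (x, undefined)))"
      unfolding Tk_def c_def ..
    finally show ?thesis .
  qed
  have inner_T: "(\<integral>\<^sup>+ y. ennreal (Tk K M k (merge J R (x, y))) \<partial>PiM R (\<lambda>_. Gs))
      = ennreal (Tk K M k (merge J R (x, undefined)))" for x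
  proof -
    interpret pr: prob_space "PiM R (\<lambda>_. Gs)" by (rule prob_PiM_Gs)
    have "(\<integral>\<^sup>+ y. ennreal (Tk K M k (merge J R (x, y))) \<partial>PiM R (\<lambda>_. Gs))
        = (\<integral>\<^sup>+ y. ennreal (Tk K M k (merge J R (x, undefined))) \<partial>PiM R (\<lambda>_. Gs))"
    proof (rule nn_integral_cong)
      fix y
      show "ennreal (Tk K M k (merge J R (x, y))) = ennreal (Tk K M k (merge J R (x, undefined)))"
        using Tk_Xk[OF XM[of x y]] by simp
    qed
    also have "\<dots> = ennreal (Tk K M k (merge J R (x, undefined)))"
      by (simp add: pr.emeasure_space_1)
    finally show ?thesis .
  qed
  have mD: "(\<lambda>h. ennreal (Dk K M k h)) \<in> borel_measurable (PiM (J \<union> R) (\<lambda>_. Gs))"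
    using meas_Dk[OF k, of M] unfolding mu by simp
  have mT: "(\<lambda>h. ennreal (Tk K M k h)) \<in> borel_measurable (PiM (J \<union> R) (\<lambda>_. Gs))"
    using meas_Tk[OF k, of M] unfolding mu by simp
  show ?thesis
    unfolding mu
    by (simp only: CGP.product_nn_integral_fold[OF disj fJ fR mD] CGP.product_nn_integral_fold[OF disj fJ fR mT]
          inner_D inner_T)
qed


lemma tangent_log:
  fixes c m D :: real
  assumes c: "0 < c" and m: "0 < m" and D: "0 \<le> D"
  shows "log 2 (1 + c * D) \<le> (log 2 (1 + c * m) - c * m / ((1 + c * m) * ln 2)) + c / ((1 + c * m) * ln 2) * D"
proof -
  have pm: "0 < 1 + c * m" using c m by (simp add: add_pos_nonneg)
  have pD: "0 < 1 + c * D" using c D by (simp add: add_pos_nonneg)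
  have "ln ((1 + c * D) / (1 + c * m)) \<le> (1 + c * D) / (1 + c * m) - 1"
    by (rule ln_le_minus_one) (use pm pD in simp)
  then have "ln (1 + c * D) - ln (1 + c * m) \<le> c * (D - m) / (1 + c * m)"
    using pm pD by (simp add: ln_div field_simps)
  then have i: "(ln (1 + c * D) - ln (1 + c * m)) / ln 2 \<le> c * (D - m) / (1 + c * m) / ln 2"
    by (rule divide_right_mono) simp
  have e1: "c * (D - m) / (1 + c * m) / ln 2 = c / ((1 + c * m) * ln 2) * D - c * m / ((1 + c * m) * ln 2)"
    unfolding divide_divide_eq_left right_diff_distrib diff_divide_distrib by (simp add: mult.commute)
  have e2: "(ln (1 + c * D) - ln (1 + c * m)) / ln 2 = log 2 (1 + c * D) - log 2 (1 + c * m)"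
    by (simp add: log_def diff_divide_distrib)
  show ?thesis using i e1 e2 by linarith
qed

lemma tangent_A0:
  fixes c m :: real
  assumes c: "0 < c" and m: "0 < m"
  shows "0 \<le> log 2 (1 + c * m) - c * m / ((1 + c * m) * ln 2)"
proof -
  have pm: "0 < 1 + c * m" using c m by (simp add: add_pos_nonneg)
  have "ln (1 / (1 + c * m)) \<le> 1 / (1 + c * m) - 1"
    by (rule ln_le_minus_one) (use pm in simp)
  then have "c * m / (1 + c * m) \<le> ln (1 + c * m)"
    using pm by (simp add: ln_div field_simps)
  then have i: "c * m / (1 + c * m) / ln 2 \<le> ln (1 + c * m) / ln 2"
    by (rule divide_right_mono) simp
  have e: "c * m / ((1 + c * m) * ln 2) = c * m / (1 + c * m) / ln 2" by (simp add: divide_divide_eq_left)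
  show ?thesis using i unfolding e log_def by linarith
qed


lemma Dk_integral:
  assumes k: "k < K" and KM: "K \<le> M"
  shows "(\<integral>\<^sup>+ h. ennreal (Dk K M k h) \<partial>channel_measure K M) = ennreal (real M - real K + 1)"
proof -
  interpret pr: prob_space "channel_measure K M"
    unfolding channel_measure_def by (rule prob_PiM_Gs)
  have "AE h in channel_measure K M. ennreal (Tk K M k h) = ennreal (real M - real K + 1)"
  proof (rule eventually_mono[OF AE_good[OF KM]])
    fix h assume "det (LB K h) \<noteq> 0"
    then have "det (GramK K M k h) \<noteq> 0" by (rule good_detG[OF k KM])
    then show "ennreal (Tk K M k h) = ennreal (real M - real K + 1)"
    proof -
      have "real M - real (K - 1) = real M - real K + 1" using k by (simp add: of_nat_diff)
      then show ?thesis using \<open>det (GramK K M k h) \<noteq> 0\<close> by (simp only: Tk_val if_True not_False_eq_True)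
    qed
  qed
  then have "(\<integral>\<^sup>+ h. ennreal (Tk K M k h) \<partial>channel_measure K M) = (\<integral>\<^sup>+ h. ennreal (real M - real K + 1) \<partial>channel_measure K M)"
    by (rule nn_integral_cong_AE)
  also have "\<dots> = ennreal (real M - real K + 1)" by (simp add: pr.emeasure_space_1)
  finally show ?thesis using Dk_Tk_integral[OF k KM] by simp
qed

lemma pointwise_bound:
  fixes P :: real
  assumes k: "k < K" and KM: "K \<le> M" and d: "det (LB K h) \<noteq> 0" and P: "0 < P"
  defines "c \<equiv> P / real K" and "m \<equiv> real M - real K + 1"
  shows "log 2 (1 + P / (real K * vec_norm_sq (col (zf_precoder (channel_mat K M h)) k)))
     \<le> (log 2 (1 + c * m) - c * m / ((1 + c * m) * ln 2)) + c / ((1 + c * m) * ln 2) * Dk K M k h"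
proof -
  let ?v = "vec_norm_sq (col (zf_precoder (channel_mat K M h)) k)"
  let ?D = "Dk K M k h"
  have v0: "0 \<le> ?v" unfolding vec_norm_sq_def by (intro sum_nonneg) simp
  have D0: "0 \<le> ?D" unfolding Dk_def by (intro sum_nonneg) simp
  have one: "1 \<le> ?D * ?v" by (rule good_bound[OF k KM d])
  have vpos: "0 < ?v" using one v0 D0 by (cases "?v = 0") auto
  have Kpos: "0 < real K" using k by simp
  have c: "0 < c" unfolding c_def using P Kpos by simp
  have m: "0 < m" unfolding m_def using KM by simp
  have "1 / ?v \<le> ?D" using one vpos by (simp add: field_simps)
  then have "P / (real K * ?v) \<le> c * ?D"
    unfolding c_def using P Kpos vpos by (simp add: field_simps)
  then have "log 2 (1 + P / (real K * ?v)) \<le> log 2 (1 + c * ?D)"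
  proof -
    have cD: "0 < 1 + c * ?D" using c D0 by (simp add: add_pos_nonneg)
    have pv: "0 < 1 + P / (real K * ?v)" using P Kpos vpos by (simp add: add_pos_nonneg)
    show ?thesis using cD pv \<open>P / (real K * ?v) \<le> c * ?D\<close> by (subst log_le_cancel_iff) auto
  qed
  also have "\<dots> \<le> (log 2 (1 + c * m) - c * m / ((1 + c * m) * ln 2)) + c / ((1 + c * m) * ln 2) * ?D"
    by (rule tangent_log[OF c m D0])
  finally show ?thesis .
qed

theorem mainTheorem3:
  fixes K M :: nat and P :: real
  assumes "0 < K" and "K \<le> M" and "0 < P"
  shows "(\<integral>\<^sup>+ h. ennreal (\<Sum>k<K. log 2 (1 + P / (real K *
              vec_norm_sq (col (zf_precoder (channel_mat K M h)) k))))
          \<partial>channel_measure K M)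
         \<le> ennreal (real K * log 2 (1 + P * (real M - real K + 1) / real K))"
proof -
  note KM = assms(2)
  interpret pr: prob_space "channel_measure K M"
    unfolding channel_measure_def by (rule prob_PiM_Gs)
  define c where "c = P / real K"
  define m where "m = real M - real K + 1"
  define B where "B = c / ((1 + c * m) * ln 2)"
  define A0 where "A0 = log 2 (1 + c * m) - c * m / ((1 + c * m) * ln 2)"
  have c: "0 < c" unfolding c_def using assms by simp
  have m: "0 < m" unfolding m_def using KM by simp
  have A0: "0 \<le> A0" unfolding A0_def by (rule tangent_A0[OF c m])
  have B: "0 \<le> B" unfolding B_def using c m by (simp add: add_pos_nonneg)
  have ae: "AE h in channel_measure K M.
      ennreal (\<Sum>k<K. log 2 (1 + P / (real K * vec_norm_sq (col (zf_precoder (channel_mat K M h)) k))))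
      \<le> (\<Sum>k<K. ennreal A0 + ennreal B * ennreal (Dk K M k h))"
  proof (rule eventually_mono[OF AE_good[OF KM]])
    fix h assume d: "det (LB K h) \<noteq> 0"
    have D0: "0 \<le> Dk K M k h" for k unfolding Dk_def by (intro sum_nonneg) simp
    have "(\<Sum>k<K. log 2 (1 + P / (real K * vec_norm_sq (col (zf_precoder (channel_mat K M h)) k))))
        \<le> (\<Sum>k<K. A0 + B * Dk K M k h)"
      unfolding A0_def B_def c_def m_def
      by (rule sum_mono) (rule pointwise_bound[OF _ KM d assms(3)], simp)
    then have "ennreal (\<Sum>k<K. log 2 (1 + P / (real K * vec_norm_sq (col (zf_precoder (channel_mat K M h)) k))))
        \<le> ennreal (\<Sum>k<K. A0 + B * Dk K M k h)"
      by (rule ennreal_leI)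
    also have "\<dots> = (\<Sum>k<K. ennreal (A0 + B * Dk K M k h))"
      using A0 B D0 by (subst sum_ennreal) auto
    also have "\<dots> = (\<Sum>k<K. ennreal A0 + ennreal B * ennreal (Dk K M k h))"
      using A0 B D0 by (intro sum.cong refl) (simp add: ennreal_mult)
    finally show "ennreal (\<Sum>k<K. log 2 (1 + P / (real K * vec_norm_sq (col (zf_precoder (channel_mat K M h)) k))))
      \<le> (\<Sum>k<K. ennreal A0 + ennreal B * ennreal (Dk K M k h))" .
  qed
  have mD: "(\<lambda>h. ennreal (Dk K M k h)) \<in> borel_measurable (channel_measure K M)" if "k < K" for k
    using meas_Dk[OF that, of M] by simp
  have "(\<integral>\<^sup>+ h. ennreal (\<Sum>k<K. log 2 (1 + P / (real K * vec_norm_sq (col (zf_precoder (channel_mat K M h)) k))))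
          \<partial>channel_measure K M)
      \<le> (\<integral>\<^sup>+ h. (\<Sum>k<K. ennreal A0 + ennreal B * ennreal (Dk K M k h)) \<partial>channel_measure K M)"
    by (rule nn_integral_mono_AE[OF ae])
  also have "\<dots> = (\<Sum>k<K. \<integral>\<^sup>+ h. (ennreal A0 + ennreal B * ennreal (Dk K M k h)) \<partial>channel_measure K M)"
    by (rule nn_integral_sum) (use mD in auto)
  also have "\<dots> = (\<Sum>k<K. ennreal A0 + ennreal B * ennreal m)"
  proof (rule sum.cong[OF refl])
    fix k assume "k \<in> {..<K}"
    then have k: "k < K" by simp
    have "(\<integral>\<^sup>+ h. (ennreal A0 + ennreal B * ennreal (Dk K M k h)) \<partial>channel_measure K M)
        = (\<integral>\<^sup>+ h. ennreal A0 \<partial>channel_measure K M) + (\<integral>\<^sup>+ h. ennreal B * ennreal (Dk K M k h) \<partial>channel_measure K M)"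
      by (rule nn_integral_add) (use mD[OF k] in auto)
    also have "\<dots> = ennreal A0 + ennreal B * (\<integral>\<^sup>+ h. ennreal (Dk K M k h) \<partial>channel_measure K M)"
      by (simp add: pr.emeasure_space_1 nn_integral_cmult[OF mD[OF k]])
    also have "\<dots> = ennreal A0 + ennreal B * ennreal m"
      unfolding m_def Dk_integral[OF k KM] ..
    finally show "(\<integral>\<^sup>+ h. (ennreal A0 + ennreal B * ennreal (Dk K M k h)) \<partial>channel_measure K M)
      = ennreal A0 + ennreal B * ennreal m" .
  qed
  also have "\<dots> = ennreal (real K * (A0 + B * m))"
    using A0 B m by (simp add: ennreal_mult ennreal_of_nat_eq_real_of_nat)
  also have "A0 + B * m = log 2 (1 + P * (real M - real K + 1) / real K)"
    unfolding A0_def B_def c_def m_def by (simp add: field_simps)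
  finally show ?thesis .
qed


end
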